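(* Let $\epsilon>0$, $B\in\mathbb{R}$, $s\in\mathbb{N}$, and let $v_1,\dots,v_N\in\mathbb{C}^{2^s}$ be orthonormal vectors such that $QK^{\epsilon}(|v_i\rangle\langle v_i|)\le B$ for all $i\le N$. Then $N\le\epsilon^{-1}2^{B}$.
   Context: Let $\mathbb{U}$ be a fixed universal prefix-free Turing machine. Finite sets of vectors with complex algebraic entries are coded by natural numbers via a fixed canonical effective indexing; $\mathbb{U}(\sigma)\downarrow=F$ means that $\mathbb{U}$ on input $\sigma$ halts and outputs the code of $F$. $\mathbb{C}^{2^n}_{alg}$ denotes the set of vectors in $\mathbb{C}^{2^n}$ all of whose entries are complex algebraic numbers. All logarithms are base 2. For a density matrix $\tau$ on $\mathbb{C}^{2^{n}}$ write $|\tau|=n$. For $\epsilon>0$ define $QK^{\epsilon}(\tau)=\inf\{|\sigma|+\log|F| : \mathbb{U}(\sigma)\downarrow=F,\ F \text{ an orthonormal subset of } \mathbb{C}^{2^{|\tau|}}_{alg},\ \sum_{v\in F}\langle v|\tau|v\rangle>\epsilon\}$, with $\inf\emptyset=\infty$. *)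

theory Defs
  imports "HOL-Analysis.Analysis" "HOL-Computational_Algebra.Polynomial"
    "HOL-Library.Extended_Real"
begin

text \<open>Vectors of C^d are represented as functions nat => complex vanishing at indices >= d.
  Matrices on C^d as functions nat => nat => complex (only entries below d matter).\<close>

definition cvec :: "nat \<Rightarrow> (nat \<Rightarrow> complex) \<Rightarrow> bool" where
  "cvec d v \<longleftrightarrow> (\<forall>j\<ge>d. v j = 0)"

definition cinner :: "nat \<Rightarrow> (nat \<Rightarrow> complex) \<Rightarrow> (nat \<Rightarrow> complex) \<Rightarrow> complex" where
  "cinner d v w = (\<Sum>j<d. cnj (v j) * w j)"

definition alg_vec :: "nat \<Rightarrow> (nat \<Rightarrow> complex) \<Rightarrow> bool" where
  "alg_vec d v \<longleftrightarrow> cvec d v \<and> (\<forall>j<d. algebraic (v j))"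

definition orthonormal_set :: "nat \<Rightarrow> (nat \<Rightarrow> complex) set \<Rightarrow> bool" where
  "orthonormal_set d F \<longleftrightarrow> (\<forall>x\<in>F. \<forall>y\<in>F. cinner d x y = (if x = y then 1 else 0))"

definition expect :: "nat \<Rightarrow> (nat \<Rightarrow> complex) \<Rightarrow> (nat \<Rightarrow> nat \<Rightarrow> complex) \<Rightarrow> complex" where
  "expect d w \<tau> = (\<Sum>i<d. \<Sum>j<d. cnj (w i) * \<tau> i j * w j)"

definition pure_dm :: "(nat \<Rightarrow> complex) \<Rightarrow> (nat \<Rightarrow> nat \<Rightarrow> complex)" where
  "pure_dm v = (\<lambda>i j. v i * cnj (v j))"

definition prefix_free :: "(bool list \<Rightarrow> nat option) \<Rightarrow> bool" where
  "prefix_free U \<longleftrightarrow> (\<forall>\<sigma> \<rho>. U \<sigma> \<noteq> None \<longrightarrow> U (\<sigma> @ \<rho>) \<noteq> None \<longrightarrow> \<rho> = [])"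

text \<open>QK^eps(tau) for a density matrix tau on C^(2^n) (n = |tau|), relative to the machine U
  and the decoding code of natural numbers into finite sets of vectors.
  The infimum of the empty set in ereal is \<infinity>.\<close>
definition QK :: "(bool list \<Rightarrow> nat option) \<Rightarrow> (nat \<Rightarrow> (nat \<Rightarrow> complex) set) \<Rightarrow> real
    \<Rightarrow> nat \<Rightarrow> (nat \<Rightarrow> nat \<Rightarrow> complex) \<Rightarrow> ereal" where
  "QK U code \<epsilon> n \<tau> = Inf {ereal (real (length \<sigma>) + log 2 (real (card F))) | \<sigma> F.
      (\<exists>c. U \<sigma> = Some c \<and> code c = F) \<and> finite F \<and> (\<forall>v\<in>F. alg_vec (2^n) v) \<and>
      orthonormal_set (2^n) F \<and> Re (\<Sum>v\<in>F. expect (2^n) v \<tau>) > \<epsilon>}"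

end

theory Submission
  imports Defs
begin

lemma cinner_sum_right:
  "cinner d x (\<lambda>j. \<Sum>i\<in>A. f i * y i j) = (\<Sum>i\<in>A. f i * cinner d x (y i))"
proof -
  have "cinner d x (\<lambda>j. \<Sum>i\<in>A. f i * y i j) = (\<Sum>j<d. \<Sum>i\<in>A. f i * (cnj (x j) * y i j))"
    unfolding cinner_def by (simp add: sum_distrib_left mult_ac)
  also have "\<dots> = (\<Sum>i\<in>A. \<Sum>j<d. f i * (cnj (x j) * y i j))" by (rule sum.swap)
  also have "\<dots> = (\<Sum>i\<in>A. f i * cinner d x (y i))"
    unfolding cinner_def by (simp add: sum_distrib_left)
  finally show ?thesis .
qed

lemma cinner_sum_left:
  "cinner d (\<lambda>j. \<Sum>i\<in>A. f i * y i j) x = (\<Sum>i\<in>A. cnj (f i) * cinner d (y i) x)"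
proof -
  have "cinner d (\<lambda>j. \<Sum>i\<in>A. f i * y i j) x = (\<Sum>j<d. \<Sum>i\<in>A. cnj (f i) * (cnj (y i j) * x j))"
    unfolding cinner_def cnj_sum sum_distrib_right sum_distrib_left by (simp add: mult_ac)
  also have "\<dots> = (\<Sum>i\<in>A. \<Sum>j<d. cnj (f i) * (cnj (y i j) * x j))" by (rule sum.swap)
  also have "\<dots> = (\<Sum>i\<in>A. cnj (f i) * cinner d (y i) x)"
    unfolding cinner_def by (simp add: sum_distrib_left)
  finally show ?thesis .
qed

lemma cinner_diff_left: "cinner d (\<lambda>j. a j - b j) x = cinner d a x - cinner d b x"
  unfolding cinner_def by (simp add: algebra_simps sum_subtractf)

lemma cinner_diff_right: "cinner d x (\<lambda>j. a j - b j) = cinner d x a - cinner d x b"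
  unfolding cinner_def by (simp add: algebra_simps sum_subtractf)

lemma cnj_mult_self: "cnj z * z = complex_of_real ((cmod z)^2)"
  by (metis complex_norm_square mult.commute)

lemma cinner_self: "cinner d x x = of_real (\<Sum>j<d. (cmod (x j))^2)"
  unfolding cinner_def of_real_sum by (rule sum.cong) (simp_all only: cnj_mult_self)

lemma cinner_cnj: "cnj (cinner d x y) = cinner d y x"
  unfolding cinner_def by (simp add: mult.commute)

lemma bessel:
  fixes N :: nat
  assumes "\<And>i j. i < N \<Longrightarrow> j < N \<Longrightarrow> cinner d (v i) (v j) = (if i = j then 1 else 0)"
  shows "(\<Sum>i<N. (cmod (cinner d (v i) w))^2) \<le> Re (cinner d w w)"
proof -
  define c where "c i = cinner d (v i) w" for i
  define s where "s j = (\<Sum>i<N. c i * v i j)" for j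
  have sw: "cinner d s w = (\<Sum>i<N. cnj (c i) * c i)"
    unfolding s_def cinner_sum_left c_def ..
  have ws: "cinner d w s = (\<Sum>i<N. c i * cnj (c i))"
    unfolding s_def cinner_sum_right c_def
    by (rule sum.cong) (simp_all only: cinner_cnj)
  have vs: "cinner d (v i) s = c i" if "i < N" for i
  proof -
    have "cinner d (v i) s = (\<Sum>k<N. c k * cinner d (v i) (v k))"
      unfolding s_def cinner_sum_right ..
    also have "\<dots> = (\<Sum>k<N. if k = i then c k else 0)"
      by (rule sum.cong) (use assms that in auto)
    also have "\<dots> = c i" using that by (simp add: sum.delta sum.delta')
    finally show ?thesis .
  qed
  have ss: "cinner d s s = (\<Sum>i<N. cnj (c i) * c i)"
    unfolding s_def[of j for j] cinner_sum_left
    using vs unfolding s_def by simp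
  have "cinner d (\<lambda>j. w j - s j) (\<lambda>j. w j - s j) = cinner d w w - (\<Sum>i<N. cnj (c i) * c i)"
    unfolding cinner_diff_left cinner_diff_right sw ws ss
    by (simp add: mult.commute)
  moreover have "Re (cinner d (\<lambda>j. w j - s j) (\<lambda>j. w j - s j)) \<ge> 0"
    unfolding cinner_self Re_complex_of_real by (rule sum_nonneg) simp
  moreover have "(\<Sum>i<N. cnj (c i) * c i) = of_real (\<Sum>i<N. (cmod (c i))^2)"
    unfolding of_real_sum by (rule sum.cong) (simp_all only: cnj_mult_self)
  ultimately have "0 \<le> Re (cinner d w w) - (\<Sum>i<N. (cmod (c i))^2)"
    by (metis Re_complex_of_real minus_complex.sel(1))
  then show ?thesis unfolding c_def by linarith
qed

lemma expect_pure: "expect d w (pure_dm v) = of_real ((cmod (cinner d v w))^2)"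
proof -
  have "expect d w (pure_dm v) = (\<Sum>i<d. cnj (w i) * v i) * (\<Sum>j<d. cnj (v j) * w j)"
    unfolding expect_def pure_dm_def by (simp add: sum_product mult_ac)
  also have "(\<Sum>i<d. cnj (w i) * v i) = cnj (cinner d v w)" unfolding cinner_def by (simp add: mult.commute)
  also have "(\<Sum>j<d. cnj (v j) * w j) = cinner d v w" unfolding cinner_def ..
  finally show ?thesis by (simp only: cnj_mult_self)
qed

lemma kraft_aux:
  fixes P :: "bool list set"
  shows "finite P \<Longrightarrow> (\<forall>p\<in>P. length p \<le> n) \<Longrightarrow> (\<forall>p\<in>P. \<forall>r. p @ r \<in> P \<longrightarrow> r = []) \<Longrightarrow>
   (\<Sum>p\<in>P. (1/2::real)^length p) \<le> 1"
proof (induction n arbitrary: P)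
  case 0
  then have "P \<subseteq> {[]}" by auto
  then have "P = {} \<or> P = {[]}" by blast
  then show ?case by auto
next
  case (Suc n)
  show ?case
  proof (cases "[] \<in> P")
    case True
    have "P \<subseteq> {[]}"
    proof
      fix x assume "x \<in> P"
      then have "[] @ x \<in> P" by simp
      then have "x = []" using Suc.prems(3) True by blast
      then show "x \<in> {[]}" by simp
    qed
    then have "P = {[]}" using True by blast
    then show ?thesis by simp
  next
    case False
    define P1 where "P1 b = {x. b # x \<in> P}" for b
    have fin: "finite (P1 b)" for b unfolding P1_def
      using finite_vimageI[OF Suc.prems(1), of "Cons b"] by (simp add: vimage_def)
    have IH: "(\<Sum>p\<in>P1 b. (1/2::real)^length p) \<le> 1" for b
    proof (rule Suc.IH[OF fin])
      show "\<forall>p\<in>P1 b. length p \<le> n" using Suc.prems(2) unfolding P1_def by force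
      show "\<forall>p\<in>P1 b. \<forall>r. p @ r \<in> P1 b \<longrightarrow> r = []"
      proof (intro ballI allI impI)
        fix p r assume "p \<in> P1 b" "p @ r \<in> P1 b"
        then have "b # p \<in> P" "(b # p) @ r \<in> P" unfolding P1_def by auto
        then show "r = []" using Suc.prems(3) by blast
      qed
    qed
    have Peq: "P = Cons True ` P1 True \<union> Cons False ` P1 False"
    proof (rule set_eqI, rule iffI)
      fix p assume "p \<in> P" then show "p \<in> Cons True ` P1 True \<union> Cons False ` P1 False"
      proof (cases p)
        case (Cons a l)
        then show ?thesis using \<open>p \<in> P\<close> unfolding P1_def by (cases a) auto
      qed (use False \<open>p \<in> P\<close> in auto)
    qed (auto simp: P1_def)
    have "(\<Sum>p\<in>P. (1/2::real)^length p) =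
      (\<Sum>p\<in>Cons True ` P1 True. (1/2::real)^length p) + (\<Sum>p\<in>Cons False ` P1 False. (1/2::real)^length p)"
      unfolding Peq by (rule sum.union_disjoint) (use fin in auto)
    also have "\<dots> = (1/2) * (\<Sum>p\<in>P1 True. (1/2::real)^length p) + (1/2) * (\<Sum>p\<in>P1 False. (1/2::real)^length p)"
      by (simp add: sum.reindex sum_distrib_left)
    also have "\<dots> \<le> 1/2 * 1 + 1/2 * 1"
      using IH[of True] IH[of False] by linarith
    finally show ?thesis by simp
  qed
qed
lemma kraft:
  assumes "prefix_free U" "finite P" "\<forall>p\<in>P. U p \<noteq> None"
  shows "(\<Sum>p\<in>P. (1/2::real)^length p) \<le> 1"
proof (rule kraft_aux[OF assms(2), of "Max (length ` P)"])
  show "\<forall>p\<in>P. length p \<le> Max (length ` P)" using assms(2) by (intro ballI Max_ge) auto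
  show "\<forall>p\<in>P. \<forall>r. p @ r \<in> P \<longrightarrow> r = []"
  proof (intro ballI allI impI)
    fix p r assume "p \<in> P" "p @ r \<in> P"
    then have "U p \<noteq> None" "U (p @ r) \<noteq> None" using assms(3) by auto
    then show "r = []" using assms(1) unfolding prefix_free_def by simp
  qed
qed


lemma powr_half: "2 powr (B' - real (n::nat)) = 2 powr B' * (1/2::real)^n"
proof -
  have "2 powr (B' - real n) = 2 powr B' / 2 powr (real n)" by (rule powr_diff)
  also have "2 powr (real n) = (2::real)^n" by (rule powr_realpow) simp
  finally show ?thesis by (simp add: power_one_over)
qed

theorem mainTheorem7:
  fixes U :: "bool list \<Rightarrow> nat option"
    and code :: "nat \<Rightarrow> (nat \<Rightarrow> complex) set"
    and \<epsilon> B :: real and s N :: nat and v :: "nat \<Rightarrow> nat \<Rightarrow> complex"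
  assumes "prefix_free U"
    and "\<epsilon> > 0"
    and "\<And>i. i < N \<Longrightarrow> cvec (2^s) (v i)"
    and "\<And>i j. i < N \<Longrightarrow> j < N \<Longrightarrow> cinner (2^s) (v i) (v j) = (if i = j then 1 else 0)"
    and "\<And>i. i < N \<Longrightarrow> QK U code \<epsilon> s (pure_dm (v i)) \<le> ereal B"
  shows "real N \<le> 2 powr B / \<epsilon>"
proof -
  define d where "d = (2::nat)^s"
  define G where "G \<sigma> = code (the (U \<sigma>))" for \<sigma>
  define Q where "Q B' i \<sigma> \<longleftrightarrow> U \<sigma> \<noteq> None \<and> finite (G \<sigma>) \<and> orthonormal_set d (G \<sigma>) \<and>
      \<epsilon> < Re (\<Sum>w\<in>G \<sigma>. expect d w (pure_dm (v i))) \<and>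
      real (length \<sigma>) + log 2 (real (card (G \<sigma>))) < B'" for B' i \<sigma>
  have orth: "cinner d (v i) (v j) = (if i = j then 1 else 0)" if "i < N" "j < N" for i j
    using assms(4)[OF that] unfolding d_def .
  have core: "real N * \<epsilon> \<le> 2 powr B'" if "B' > B" for B'
  proof -
    have ex: "\<exists>\<sigma>. Q B' i \<sigma>" if "i < N" for i
    proof -
      have "ereal B < ereal B'" using \<open>B' > B\<close> by simp
      then have "QK U code \<epsilon> s (pure_dm (v i)) < ereal B'"
        using assms(5)[OF that] by (rule le_less_trans[rotated])
      then obtain \<sigma> F where
        sF: "\<exists>c. U \<sigma> = Some c \<and> code c = F" "finite F" "orthonormal_set (2^s) F"
            "\<epsilon> < Re (\<Sum>w\<in>F. expect (2^s) w (pure_dm (v i)))"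
            "ereal (real (length \<sigma>) + log 2 (real (card F))) < ereal B'"
        unfolding QK_def Inf_less_iff by blast
      have "G \<sigma> = F" "U \<sigma> \<noteq> None" using sF(1) unfolding G_def by auto
      then have "Q B' i \<sigma>" using sF(2-5) unfolding Q_def d_def by simp
      then show ?thesis ..
    qed
    have "\<forall>i\<in>{..<N}. \<exists>\<sigma>. Q B' i \<sigma>" using ex by blast
    from bchoice[OF this] obtain sg where sg0: "\<forall>i\<in>{..<N}. Q B' i (sg i)"
      by blast
    have sg: "Q B' i (sg i)" if "i \<in> {..<N}" for i using sg0 that by blast
    define P where "P = sg ` {..<N}"
    have finP: "finite P" unfolding P_def by simp
    have Pdom: "\<forall>p\<in>P. U p \<noteq> None"
    proof
      fix p assume "p \<in> P"
      then obtain i where "i < N" "p = sg i" by (auto simp: P_def)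
      then show "U p \<noteq> None" using sg[of i] unfolding Q_def by simp
    qed
    have grp: "real (card {i \<in> {..<N}. sg i = p}) * \<epsilon> \<le> 2 powr B' * (1/2)^length p"
      if pP: "p \<in> P" for p
    proof -
      define I where "I = {i \<in> {..<N}. sg i = p}"
      have Ip: "i \<in> I \<Longrightarrow> i < N \<and> sg i = p" for i unfolding I_def by auto
      have finI: "finite I" unfolding I_def by simp
      obtain i0 where i0: "i0 < N" "sg i0 = p" using pP unfolding P_def by auto
      have Qp: "U p \<noteq> None" "finite (G p)" "orthonormal_set d (G p)"
        "real (length p) + log 2 (real (card (G p))) < B'"
        using sg[of i0] i0 unfolding Q_def by auto
      have cardG: "real (card (G p)) \<le> 2 powr B' * (1/2)^length p"
      proof (cases "card (G p) = 0")
        case True then show ?thesis by simp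
      next
        case False
        then have "real (card (G p)) = 2 powr (log 2 (real (card (G p))))" by simp
        also have "\<dots> \<le> 2 powr (B' - real (length p))"
          using Qp(4) by (intro powr_mono) auto
        also have "\<dots> = 2 powr B' * (1/2)^length p"
          by (rule powr_half)
        finally show ?thesis .
      qed
      have "real (card I) * \<epsilon> = (\<Sum>i\<in>I. \<epsilon>)" by simp
      also have "\<dots> \<le> (\<Sum>i\<in>I. Re (\<Sum>w\<in>G p. expect d w (pure_dm (v i))))"
      proof (rule sum_mono)
        fix i assume "i \<in> I"
        then have "Q B' i (sg i)" "sg i = p" using sg Ip by auto
        then have "\<epsilon> < Re (\<Sum>w\<in>G p. expect d w (pure_dm (v i)))" unfolding Q_def by simp
        then show "\<epsilon> \<le> Re (\<Sum>w\<in>G p. expect d w (pure_dm (v i)))" by (rule less_imp_le)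
      qed
      also have "\<dots> = (\<Sum>i\<in>I. \<Sum>w\<in>G p. (cmod (cinner d (v i) w))^2)"
        by (simp add: Re_sum expect_pure)
      also have "\<dots> = (\<Sum>w\<in>G p. \<Sum>i\<in>I. (cmod (cinner d (v i) w))^2)"
        by (rule sum.swap)
      also have "\<dots> \<le> (\<Sum>w\<in>G p. \<Sum>i<N. (cmod (cinner d (v i) w))^2)"
        by (intro sum_mono sum_mono2) (use Ip in auto)
      also have "\<dots> \<le> (\<Sum>w\<in>G p. Re (cinner d w w))"
        by (intro sum_mono bessel orth)
      also have "\<dots> = (\<Sum>w\<in>G p. 1)"
        using Qp(3) unfolding orthonormal_set_def by (intro sum.cong) auto
      also have "\<dots> = real (card (G p))" by simp
      also have "\<dots> \<le> 2 powr B' * (1/2)^length p" by (rule cardG)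
      finally show ?thesis unfolding I_def .
    qed
    have "real N * \<epsilon> = (\<Sum>i<N. \<epsilon>)" by simp
    also have "\<dots> = (\<Sum>p\<in>P. \<Sum>i\<in>{i \<in> {..<N}. sg i = p}. \<epsilon>)"
      by (rule sum.group[symmetric]) (auto simp: P_def)
    also have "\<dots> = (\<Sum>p\<in>P. real (card {i \<in> {..<N}. sg i = p}) * \<epsilon>)" by simp
    also have "\<dots> \<le> (\<Sum>p\<in>P. 2 powr B' * (1/2)^length p)"
      by (rule sum_mono) (rule grp)
    also have "\<dots> = 2 powr B' * (\<Sum>p\<in>P. (1/2)^length p)"
      by (simp add: sum_distrib_left)
    also have "\<dots> \<le> 2 powr B' * 1"
      by (intro mult_left_mono kraft[OF assms(1) finP Pdom]) simp
    finally show ?thesis by simp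
  qed
  have lim: "((\<lambda>x::real. 2 powr x) \<longlongrightarrow> 2 powr B) (at_right B)"
    by (intro tendsto_powr tendsto_const tendsto_ident_at) simp
  have ev: "eventually (\<lambda>x. real N * \<epsilon> \<le> 2 powr x) (at_right B)"
    using eventually_at_right_less[of B] by (rule eventually_mono) (rule core)
  have "real N * \<epsilon> \<le> 2 powr B"
    by (rule tendsto_le[OF _ lim tendsto_const ev]) simp
  then show ?thesis using assms(2) by (simp add: pos_le_divide_eq)
qed

end
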